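(* Let $(\mathbf C,I)$ be a finite-type based chain complex and let $M=\{\alpha\to\beta\}$ be a single $(n+1,n)$-pairing (so $\alpha\in I_{n+1}$, $\beta\in I_n$ and $\partial_{\beta,\alpha}$ is an isomorphism). Then $\operatorname{Im}\partial_n^M=\operatorname{Im}\partial_n$, where $\partial^M$ is the boundary of the Morse complex $\mathbf C^M$ (note $\mathbf C^M_{n-1}=\mathbf C_{n-1}$).
   Context: Based chain complex: chain complex $(\mathbf C,\partial)$ of finite-dimensional real vector spaces with disjoint finite index sets $I_n$ and $\mathbf C_n=\bigoplus_{\alpha\in I_n}C_\alpha$; $\partial_{\tau,\sigma}=\pi_\tau\partial i_\sigma:C_\sigma\to C_\tau$. For the single pairing $M=\{\alpha\to\beta\}$, the Morse complex $\mathbf C^M$ has summands $C_\sigma$ for $\sigma\in I\setminus\{\alpha,\beta\}$ and boundary components $\partial^M_{\tau,\sigma}=\partial_{\tau,\sigma}-\partial_{\tau,\alpha}\partial_{\beta,\alpha}^{-1}\partial_{\beta,\sigma}$. *)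

theory Defs
  imports Complex_Main
begin

text \<open>
Index set I (elements of I_n are the sigma in I with deg sigma = n); each summand C_sigma is a
finite-dimensional real vector space, identified with R^(dm sigma) via a basis; a vector of
C_sigma is a function nat => real vanishing at k >= dm sigma.  The component
partial_{tau,sigma} : C_sigma -> C_tau is the (dm tau x dm sigma) real matrix D tau sigma
(entries D tau sigma j k, j < dm tau, k < dm sigma).
\<close>

definition chains :: "'i set \<Rightarrow> ('i \<Rightarrow> int) \<Rightarrow> ('i \<Rightarrow> nat) \<Rightarrow> int \<Rightarrow> ('i \<Rightarrow> nat \<Rightarrow> real) set" where
  "chains S deg dm n =
     {x. \<forall>\<sigma> k. x \<sigma> k \<noteq> 0 \<longrightarrow> \<sigma> \<in> S \<and> deg \<sigma> = n \<and> k < dm \<sigma>}"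

definition bd :: "'i set \<Rightarrow> ('i \<Rightarrow> int) \<Rightarrow> ('i \<Rightarrow> nat) \<Rightarrow> ('i \<Rightarrow> 'i \<Rightarrow> nat \<Rightarrow> nat \<Rightarrow> real)
                   \<Rightarrow> ('i \<Rightarrow> nat \<Rightarrow> real) \<Rightarrow> ('i \<Rightarrow> nat \<Rightarrow> real)" where
  "bd S deg dm D x = (\<lambda>\<tau> j. if \<tau> \<in> S \<and> j < dm \<tau> then
      (\<Sum>\<sigma>\<in>{\<sigma>\<in>S. deg \<sigma> = deg \<tau> + 1}. \<Sum>k<dm \<sigma>. D \<tau> \<sigma> j k * x \<sigma> k) else 0)"

definition based_chain_complex ::
  "'i set \<Rightarrow> ('i \<Rightarrow> int) \<Rightarrow> ('i \<Rightarrow> nat) \<Rightarrow> ('i \<Rightarrow> 'i \<Rightarrow> nat \<Rightarrow> nat \<Rightarrow> real) \<Rightarrow> bool" where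
  "based_chain_complex I deg dm D \<longleftrightarrow>
     (\<forall>\<tau> \<sigma>. deg \<tau> + 1 \<noteq> deg \<sigma> \<longrightarrow> D \<tau> \<sigma> = (\<lambda>_ _. 0)) \<and>
     (\<forall>\<rho>\<in>I. \<forall>\<tau>\<in>I. \<forall>j<dm \<rho>. \<forall>k<dm \<tau>.
        (\<Sum>\<sigma>\<in>{\<sigma>\<in>I. deg \<sigma> = deg \<rho> + 1}. \<Sum>l<dm \<sigma>. D \<rho> \<sigma> j l * D \<sigma> \<tau> l k) = 0)"

definition finite_type :: "'i set \<Rightarrow> ('i \<Rightarrow> int) \<Rightarrow> bool" where
  "finite_type I deg \<longleftrightarrow> (\<forall>n. finite {\<sigma>\<in>I. deg \<sigma> = n})"

definition is_inverse_block :: "nat \<Rightarrow> nat \<Rightarrow> (nat \<Rightarrow> nat \<Rightarrow> real) \<Rightarrow> (nat \<Rightarrow> nat \<Rightarrow> real) \<Rightarrow> bool" where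
  "is_inverse_block da db A E \<longleftrightarrow>
     (\<forall>i<da. \<forall>k<da. (\<Sum>m<db. E i m * A m k) = (if i = k then 1 else 0)) \<and>
     (\<forall>i<db. \<forall>k<db. (\<Sum>m<da. A i m * E m k) = (if i = k then 1 else 0))"

definition is_iso_block :: "nat \<Rightarrow> nat \<Rightarrow> (nat \<Rightarrow> nat \<Rightarrow> real) \<Rightarrow> bool" where
  "is_iso_block da db A \<longleftrightarrow> (\<exists>E. is_inverse_block da db A E)"

definition is_pairing ::
  "'i set \<Rightarrow> ('i \<Rightarrow> int) \<Rightarrow> ('i \<Rightarrow> nat) \<Rightarrow> ('i \<Rightarrow> 'i \<Rightarrow> nat \<Rightarrow> nat \<Rightarrow> real) \<Rightarrow> int \<Rightarrow> 'i \<Rightarrow> 'i \<Rightarrow> bool" where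
  "is_pairing I deg dm D n \<alpha> \<beta> \<longleftrightarrow>
     \<alpha> \<in> I \<and> \<beta> \<in> I \<and> deg \<alpha> = n + 1 \<and> deg \<beta> = n \<and> is_iso_block (dm \<alpha>) (dm \<beta>) (D \<beta> \<alpha>)"

definition block_inv :: "nat \<Rightarrow> nat \<Rightarrow> (nat \<Rightarrow> nat \<Rightarrow> real) \<Rightarrow> (nat \<Rightarrow> nat \<Rightarrow> real)" where
  "block_inv da db A = (SOME E. is_inverse_block da db A E)"

definition morse_D ::
  "('i \<Rightarrow> nat) \<Rightarrow> ('i \<Rightarrow> 'i \<Rightarrow> nat \<Rightarrow> nat \<Rightarrow> real) \<Rightarrow> 'i \<Rightarrow> 'i \<Rightarrow> ('i \<Rightarrow> 'i \<Rightarrow> nat \<Rightarrow> nat \<Rightarrow> real)" where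
  "morse_D dm D \<alpha> \<beta> = (\<lambda>\<tau> \<sigma> j k. D \<tau> \<sigma> j k -
     (\<Sum>l<dm \<alpha>. \<Sum>m<dm \<beta>.
        D \<tau> \<alpha> j l * block_inv (dm \<alpha>) (dm \<beta>) (D \<beta> \<alpha>) l m * D \<beta> \<sigma> m k))"

end

theory Submission
  imports Defs
begin

lemma bd_bd_zero:
  assumes bc: "based_chain_complex I deg dm D" and "\<rho> \<in> I" "j < dm \<rho>" "\<alpha> \<in> I"
  shows "(\<Sum>\<sigma>\<in>{\<sigma>\<in>I. deg \<sigma> = deg \<rho> + 1}. \<Sum>l<dm \<sigma>. D \<rho> \<sigma> j l * (\<Sum>k<dm \<alpha>. D \<sigma> \<alpha> l k * c k)) = 0"
proof -
  have "(\<Sum>\<sigma>\<in>{\<sigma>\<in>I. deg \<sigma> = deg \<rho> + 1}. \<Sum>l<dm \<sigma>. D \<rho> \<sigma> j l * (\<Sum>k<dm \<alpha>. D \<sigma> \<alpha> l k * c k))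
     = (\<Sum>\<sigma>\<in>{\<sigma>\<in>I. deg \<sigma> = deg \<rho> + 1}. \<Sum>l<dm \<sigma>. \<Sum>k<dm \<alpha>. D \<rho> \<sigma> j l * D \<sigma> \<alpha> l k * c k)"
    by (simp add: sum_distrib_left mult.assoc)
  also have "\<dots> = (\<Sum>k<dm \<alpha>. (\<Sum>\<sigma>\<in>{\<sigma>\<in>I. deg \<sigma> = deg \<rho> + 1}. \<Sum>l<dm \<sigma>. D \<rho> \<sigma> j l * D \<sigma> \<alpha> l k) * c k)"
    by (simp add: sum_distrib_right sum.swap[of _ "{..<dm \<alpha>}"])
  also have "\<dots> = 0"
    using bc assms unfolding based_chain_complex_def by simp
  finally show ?thesis .
qed

theorem mainTheorem13:
  fixes I :: "'i set" and deg :: "'i \<Rightarrow> int" and dm :: "'i \<Rightarrow> nat"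
    and D :: "'i \<Rightarrow> 'i \<Rightarrow> nat \<Rightarrow> nat \<Rightarrow> real" and n :: int and \<alpha> \<beta> :: 'i
  assumes "based_chain_complex I deg dm D"
    and "finite_type I deg"
    and "is_pairing I deg dm D n \<alpha> \<beta>"
  shows "bd (I - {\<alpha>, \<beta>}) deg dm (morse_D dm D \<alpha> \<beta>) ` chains (I - {\<alpha>, \<beta>}) deg dm n
         = bd I deg dm D ` chains I deg dm n"
proof -
  note bc = assms(1)
  have D0: "\<And>\<tau> \<sigma>. deg \<tau> + 1 \<noteq> deg \<sigma> \<Longrightarrow> D \<tau> \<sigma> = (\<lambda>_ _. 0)"
    using bc unfolding based_chain_complex_def by blast
  have fin: "\<And>m. finite {\<sigma>\<in>I. deg \<sigma> = m}" using assms(2) unfolding finite_type_def by blast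
  have aI: "\<alpha> \<in> I" and bI: "\<beta> \<in> I" and da: "deg \<alpha> = n + 1" and db: "deg \<beta> = n"
    and iso: "is_iso_block (dm \<alpha>) (dm \<beta>) (D \<beta> \<alpha>)"
    using assms(3) unfolding is_pairing_def by auto
  obtain E where E: "is_inverse_block (dm \<alpha>) (dm \<beta>) (D \<beta> \<alpha>) E"
    using iso unfolding is_iso_block_def by blast
  have E2: "\<And>i k. i < dm \<beta> \<Longrightarrow> k < dm \<beta> \<Longrightarrow> (\<Sum>m<dm \<alpha>. D \<beta> \<alpha> i m * E m k) = (if i = k then 1 else 0)"
    using E unfolding is_inverse_block_def by blast
  have fact1: "bd (I - {\<alpha>, \<beta>}) deg dm (morse_D dm D \<alpha> \<beta>) x = bd I deg dm D x"
    if x: "x \<in> chains (I - {\<alpha>, \<beta>}) deg dm n" for x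
  proof (rule ext, rule ext)
    fix \<tau> j
    have xz: "\<And>\<sigma> k. \<not> (\<sigma> \<in> I - {\<alpha>, \<beta>} \<and> deg \<sigma> = n \<and> k < dm \<sigma>) \<Longrightarrow> x \<sigma> k = 0"
      using x unfolding chains_def by blast
    show "bd (I - {\<alpha>, \<beta>}) deg dm (morse_D dm D \<alpha> \<beta>) x \<tau> j = bd I deg dm D x \<tau> j"
    proof (cases "deg \<tau> + 1 = n")
      case False
      have "bd (I - {\<alpha>, \<beta>}) deg dm (morse_D dm D \<alpha> \<beta>) x \<tau> j = 0"
        unfolding bd_def using xz False by (auto intro!: sum.neutral)
      moreover have "bd I deg dm D x \<tau> j = 0"
        unfolding bd_def using xz False by (auto intro!: sum.neutral)
      ultimately show ?thesis by simp
    next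
      case True
      have Dta: "D \<tau> \<alpha> = (\<lambda>_ _. 0)" using D0 True da by simp
      have ta: "\<tau> \<noteq> \<alpha>" "\<tau> \<noteq> \<beta>" using True da db by auto
      have mD: "morse_D dm D \<alpha> \<beta> \<tau> \<sigma> j k = D \<tau> \<sigma> j k" for \<sigma> k
        unfolding morse_D_def Dta by simp
      have "(\<Sum>\<sigma>\<in>{\<sigma>\<in>I - {\<alpha>, \<beta>}. deg \<sigma> = deg \<tau> + 1}. \<Sum>k<dm \<sigma>. D \<tau> \<sigma> j k * x \<sigma> k)
          = (\<Sum>\<sigma>\<in>{\<sigma>\<in>I. deg \<sigma> = deg \<tau> + 1}. \<Sum>k<dm \<sigma>. D \<tau> \<sigma> j k * x \<sigma> k)"
        apply (rule sum.mono_neutral_left)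
          using fin apply simp
         apply blast
        using xz by auto
      then show ?thesis unfolding bd_def mD using ta by simp
    qed
  qed
  show ?thesis
  proof
    show "bd (I - {\<alpha>, \<beta>}) deg dm (morse_D dm D \<alpha> \<beta>) ` chains (I - {\<alpha>, \<beta>}) deg dm n
         \<subseteq> bd I deg dm D ` chains I deg dm n"
    proof
      fix y assume "y \<in> bd (I - {\<alpha>, \<beta>}) deg dm (morse_D dm D \<alpha> \<beta>) ` chains (I - {\<alpha>, \<beta>}) deg dm n"
      then obtain x where x: "x \<in> chains (I - {\<alpha>, \<beta>}) deg dm n"
        and y: "y = bd (I - {\<alpha>, \<beta>}) deg dm (morse_D dm D \<alpha> \<beta>) x" by blast
      have "x \<in> chains I deg dm n" using x unfolding chains_def by blast
      then show "y \<in> bd I deg dm D ` chains I deg dm n" using fact1[OF x] y by simp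
    qed
  next
    show "bd I deg dm D ` chains I deg dm n
       \<subseteq> bd (I - {\<alpha>, \<beta>}) deg dm (morse_D dm D \<alpha> \<beta>) ` chains (I - {\<alpha>, \<beta>}) deg dm n"
    proof
      fix y assume "y \<in> bd I deg dm D ` chains I deg dm n"
      then obtain x where x: "x \<in> chains I deg dm n" and y: "y = bd I deg dm D x" by blast
      have xz: "\<And>\<sigma> k. \<not> (\<sigma> \<in> I \<and> deg \<sigma> = n \<and> k < dm \<sigma>) \<Longrightarrow> x \<sigma> k = 0"
        using x unfolding chains_def by blast
      define c where "c k = (\<Sum>m<dm \<beta>. E k m * x \<beta> m)" for k
      define w where "w \<sigma> l = (if \<sigma> \<in> I \<and> deg \<sigma> = n \<and> l < dm \<sigma> then
          (\<Sum>k<dm \<alpha>. D \<sigma> \<alpha> l k * c k) else 0)" for \<sigma> l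
      define x' where "x' \<sigma> l = x \<sigma> l - w \<sigma> l" for \<sigma> l
      have wb: "w \<beta> l = x \<beta> l" if "l < dm \<beta>" for l
      proof -
        have "w \<beta> l = (\<Sum>k<dm \<alpha>. \<Sum>m<dm \<beta>. D \<beta> \<alpha> l k * E k m * x \<beta> m)"
          unfolding w_def c_def using bI db that by (simp add: sum_distrib_left mult.assoc)
        also have "\<dots> = (\<Sum>m<dm \<beta>. (\<Sum>k<dm \<alpha>. D \<beta> \<alpha> l k * E k m) * x \<beta> m)"
          by (simp add: sum_distrib_right sum.swap[of _ "{..<dm \<beta>}"])
        also have "\<dots> = (\<Sum>m<dm \<beta>. (if l = m then x \<beta> m else 0))"
          using E2 that by (intro sum.cong) auto
        also have "\<dots> = x \<beta> l" using that by simp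
        finally show ?thesis .
      qed
      have x'c: "x' \<in> chains (I - {\<alpha>, \<beta>}) deg dm n"
        unfolding chains_def
      proof (intro CollectI allI impI)
        fix \<sigma> k assume nz: "x' \<sigma> k \<noteq> 0"
        have "\<sigma> \<in> I \<and> deg \<sigma> = n \<and> k < dm \<sigma>"
        proof (rule ccontr)
          assume h: "\<not> (\<sigma> \<in> I \<and> deg \<sigma> = n \<and> k < dm \<sigma>)"
          then have "x \<sigma> k = 0" "w \<sigma> k = 0" using xz unfolding w_def by auto
          then show False using nz unfolding x'_def by simp
        qed
        moreover have "\<sigma> \<noteq> \<beta>" using nz wb calculation unfolding x'_def by auto
        moreover have "\<sigma> \<noteq> \<alpha>" using calculation da by auto
        ultimately show "\<sigma> \<in> I - {\<alpha>, \<beta>} \<and> deg \<sigma> = n \<and> k < dm \<sigma>" by auto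
      qed
      have "bd I deg dm D x' = bd I deg dm D x"
      proof (rule ext, rule ext)
        fix \<rho> j
        show "bd I deg dm D x' \<rho> j = bd I deg dm D x \<rho> j"
        proof (cases "\<rho> \<in> I \<and> j < dm \<rho>")
          case False then show ?thesis unfolding bd_def by auto
        next
          case True
          have W: "(\<Sum>\<sigma>\<in>{\<sigma>\<in>I. deg \<sigma> = deg \<rho> + 1}. \<Sum>l<dm \<sigma>. D \<rho> \<sigma> j l * w \<sigma> l) = 0"
          proof (cases "deg \<rho> + 1 = n")
            case True2: True
            have "(\<Sum>\<sigma>\<in>{\<sigma>\<in>I. deg \<sigma> = deg \<rho> + 1}. \<Sum>l<dm \<sigma>. D \<rho> \<sigma> j l * w \<sigma> l)
               = (\<Sum>\<sigma>\<in>{\<sigma>\<in>I. deg \<sigma> = deg \<rho> + 1}. \<Sum>l<dm \<sigma>. D \<rho> \<sigma> j l * (\<Sum>k<dm \<alpha>. D \<sigma> \<alpha> l k * c k))"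
              unfolding w_def using True2 by (intro sum.cong) auto
            also have "\<dots> = 0" using bd_bd_zero[OF bc] True aI by blast
            finally show ?thesis .
          next
            case False
            then show ?thesis unfolding w_def by (auto intro!: sum.neutral)
          qed
          show ?thesis using True W unfolding bd_def x'_def
            by (simp add: right_diff_distrib sum_subtractf)
        qed
      qed
      then show "y \<in> bd (I - {\<alpha>, \<beta>}) deg dm (morse_D dm D \<alpha> \<beta>) ` chains (I - {\<alpha>, \<beta>}) deg dm n"
        using fact1[OF x'c] y x'c by (metis image_eqI)
    qed
  qed
qed

end
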